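(* Assume $J$ satisfies (J1), (J2), (J3), (J4) and $h$ satisfies (h1), (h2). For $\ell\in\mathbb N$ let $\psi^{(\ell)}$ be the configuration with $\psi^{(\ell)}_i=-1$ for $i\in Q_\ell$ and $\psi^{(\ell)}_i=1$ for $i\in\mathbb Z^d\setminus Q_\ell$. Then there is a constant $C\ge1$, depending only on $d$, $\mu$ and $\tau$, such that for every $\ell\in\mathbb N$ $$H_{Q_\ell}(\psi^{(\ell)})\le C\,\ell^{d-1}\Big(1+\sum_{m=1}^{\ell+1}\sigma(m)\Big).$$
   Context: Fix $d\ge2$, $|x|:=\sum_n|x_n|$, $|x|_\infty:=\max_n|x_n|$. Configurations are maps $u:\mathbb Z^d\to\{-1,1\}$. Given $J:\mathbb Z^d\times\mathbb Z^d\to[0,\infty)$ and $h:\mathbb Z^d\to\mathbb R$, for finite $\Gamma$: $H_\Gamma(u):=\sum_{(i,j)\in\mathbb Z^{2d}\setminus(\mathbb Z^d\setminus\Gamma)^2}J_{ij}(1-u_iu_j)+\sum_{i\in\Gamma}h_iu_i$. $Q_\ell:=\{i\in\mathbb Z^d:|i|_\infty\le\ell\}$. Conditions (constants $\Lambda\ge\lambda>0$, $\mu>0$, $\tau\in\mathbb N$): (J1) $J_{ij}=J_{ji}$; (J2) $J_{ii}=0$; (J3) $J_{ij}\ge\lambda$ if $|i-j|=1$; (J4) $\sum_jJ_{ij}\le\Lambda$ for all $i$; (h1) $\sup_i|h_i|\le\mu$; (h2) $\sum_{i\in F}h_i=0$ for every fundamental domain $F$ (set of representatives) of $\mathbb Z^d/\tau\mathbb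 Z^d$. For $R\in\mathbb N$, $\sigma(R):=\sup_{i\in\mathbb Z^d}\sum_{j:\,|j-i|_\infty\ge R}J_{ij}$. *)

theory Defs
  imports "HOL-Analysis.Analysis"
begin

text \<open>Sites of the lattice Z^d are functions 'n \<Rightarrow> int for a finite index type 'n
  with CARD('n) = d.\<close>

definition l1norm :: "('n::finite \<Rightarrow> int) \<Rightarrow> int" where
  "l1norm x = (\<Sum>k\<in>UNIV. \<bar>x k\<bar>)"

definition supnorm :: "('n::finite \<Rightarrow> int) \<Rightarrow> int" where
  "supnorm x = Max (range (\<lambda>k. \<bar>x k\<bar>))"

definition cube :: "nat \<Rightarrow> ('n::finite \<Rightarrow> int) set" where
  "cube l = {i. supnorm i \<le> int l}"

definition hamiltonian ::
  "(('n::finite \<Rightarrow> int) \<Rightarrow> ('n \<Rightarrow> int) \<Rightarrow> real) \<Rightarrow> (('n \<Rightarrow> int) \<Rightarrow> real)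
    \<Rightarrow> ('n \<Rightarrow> int) set \<Rightarrow> (('n \<Rightarrow> int) \<Rightarrow> real) \<Rightarrow> real" where
  "hamiltonian J h \<Gamma> u =
     (\<Sum>\<^sub>\<infinity>(i,j)\<in>UNIV - ((- \<Gamma>) \<times> (- \<Gamma>)). J i j * (1 - u i * u j))
     + (\<Sum>i\<in>\<Gamma>. h i * u i)"

definition sigma_tail ::
  "(('n::finite \<Rightarrow> int) \<Rightarrow> ('n \<Rightarrow> int) \<Rightarrow> real) \<Rightarrow> nat \<Rightarrow> real" where
  "sigma_tail J R = (SUP i. (\<Sum>\<^sub>\<infinity>j\<in>{j. supnorm (j - i) \<ge> int R}. J i j))"

definition fundamental_domain :: "nat \<Rightarrow> ('n::finite \<Rightarrow> int) set \<Rightarrow> bool" where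
  "fundamental_domain \<tau> F \<longleftrightarrow> (\<forall>x. \<exists>!f. f \<in> F \<and> (\<forall>k. int \<tau> dvd (x k - f k)))"

definition psi :: "nat \<Rightarrow> ('n::finite \<Rightarrow> int) \<Rightarrow> real" where
  "psi l i = (if i \<in> cube l then -1 else 1)"

end

theory Submission
  imports Defs
begin



lemma supnorm_le_iff: "supnorm (x::'n::finite\<Rightarrow>int) \<le> c \<longleftrightarrow> (\<forall>k. \<bar>x k\<bar> \<le> c)"
  unfolding supnorm_def by (subst Max_le_iff) auto

lemma abs_le_supnorm: "\<bar>(x::'n::finite\<Rightarrow>int) k\<bar> \<le> supnorm x"
  unfolding supnorm_def by (rule Max_ge) auto

lemma supnorm_nonneg: "0 \<le> supnorm (x::'n::finite\<Rightarrow>int)"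
  using abs_le_supnorm[of x undefined] by linarith

lemma supnorm_triangle: "supnorm (x::'n::finite\<Rightarrow>int) \<le> supnorm (x - y) + supnorm y"
  unfolding supnorm_le_iff
proof
  fix k
  have "\<bar>x k\<bar> \<le> \<bar>x k - y k\<bar> + \<bar>y k\<bar>" by linarith
  also have "\<dots> \<le> supnorm (x - y) + supnorm y"
    using abs_le_supnorm[of "x-y" k] abs_le_supnorm[of y k] by simp
  finally show "\<bar>x k\<bar> \<le> supnorm (x - y) + supnorm y" .
qed

lemma cube_eq: "cube l = (PiE UNIV (\<lambda>_. {-int l..int l}) :: ('n::finite\<Rightarrow>int) set)"
proof (rule set_eqI)
  fix x :: "'n\<Rightarrow>int"
  have "(\<forall>k. \<bar>x k\<bar> \<le> int l) \<longleftrightarrow> (\<forall>k. x k \<in> {-int l..int l})" by (intro iff_allI) (simp only: abs_le_iff atLeastAtMost_iff, arith)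
  then show "x \<in> cube l \<longleftrightarrow> x \<in> PiE UNIV (\<lambda>_. {-int l..int l})"
    unfolding cube_def supnorm_le_iff by (simp add: PiE_iff)
qed

lemma finite_cube: "finite (cube l :: ('n::finite\<Rightarrow>int) set)"
  unfolding cube_eq by (rule finite_PiE) auto

lemma card_cube: "card (cube l :: ('n::finite\<Rightarrow>int) set) = (2*l+1)^CARD('n)"
proof -
  have "nat (2 * int l + 1) = 2*l+1" by (simp add: nat_add_distrib nat_mult_distrib)
  then show ?thesis unfolding cube_eq by (simp add: card_PiE)
qed

lemma pow_diff_le:
  fixes a b :: real assumes "0 \<le> b" "b \<le> a"
  shows "a^(Suc n) - b^(Suc n) \<le> real (Suc n) * a^n * (a - b)"
proof (induction n)
  case 0 then show ?case by simp
next
  case (Suc n)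
  have "a^(Suc (Suc n)) - b^(Suc (Suc n)) = a*(a^Suc n - b^Suc n) + b^Suc n*(a-b)"
    by (simp add: algebra_simps)
  also have "\<dots> \<le> a*(real (Suc n) * a^n * (a - b)) + a^Suc n*(a-b)"
    apply (rule add_mono)
     apply (rule mult_left_mono[OF Suc]) using assms apply simp
    apply (rule mult_right_mono) apply (rule power_mono) using assms by auto
  also have "\<dots> = real (Suc (Suc n)) * a^Suc n * (a - b)" by (simp add: algebra_simps)
  finally show ?case .
qed

lemma shell_card:
  assumes "CARD('n::finite) \<ge> 1"
  shows "real (card {i::'n\<Rightarrow>int. supnorm i = int k}) \<le> 2 * CARD('n) * (2*k+1)^(CARD('n)-1)"
proof (cases k)
  case 0
  have "{i::'n\<Rightarrow>int. supnorm i = int k} \<subseteq> {\<lambda>_. 0}"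
  proof
    fix i :: "'n\<Rightarrow>int" assume "i \<in> {i::'n\<Rightarrow>int. supnorm i = int k}"
    hence s: "supnorm i = 0" using 0 by simp
    have "i x = 0" for x using abs_le_supnorm[of i x] s by simp
    thus "i \<in> {\<lambda>_. 0}" by (simp add: fun_eq_iff)
  qed
  then have "card {i::'n\<Rightarrow>int. supnorm i = int k} \<le> card {\<lambda>_::'n. 0::int}"
    by (rule card_mono[rotated]) simp
  then have c1: "real (card {i::'n\<Rightarrow>int. supnorm i = int k}) \<le> 1" by simp
  have "(1::real) \<le> real CARD('n)" using assms by (metis of_nat_1 of_nat_le_iff)
  then have "(1::real) \<le> 2 * real CARD('n)" by linarith
  also have "\<dots> = 2 * CARD('n) * (2*k+1)^(CARD('n)-1)" using 0 by simp
  finally show ?thesis using c1 by linarith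
next
  case (Suc k')
  define d where "d = CARD('n)"
  have d1: "d = Suc (d-1)" using assms unfolding d_def by simp
  have eq: "{i::'n\<Rightarrow>int. supnorm i = int k} = cube k - cube k'"
    unfolding cube_def using Suc by auto
  have sub: "cube k' \<subseteq> (cube k :: ('n\<Rightarrow>int) set)" unfolding cube_def using Suc by auto
  have cd: "card {i::'n\<Rightarrow>int. supnorm i = int k} = (2*k+1)^d - (2*k'+1)^d"
    unfolding eq card_Diff_subset[OF finite_cube sub] card_cube d_def ..
  have le: "(2*k'+1)^d \<le> (2*k+1)^d" using Suc by (intro power_mono) auto
  have "real (card {i::'n\<Rightarrow>int. supnorm i = int k}) = real ((2*k+1)^d) - real ((2*k'+1)^d)"
    unfolding cd using le by (rule of_nat_diff)
  also have "\<dots> = real (2*k+1)^Suc (d-1) - real (2*k'+1)^Suc (d-1)"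
    by (simp only: of_nat_power d1[symmetric])
  also have "\<dots> \<le> real (Suc (d-1)) * real (2*k+1)^(d-1) * (real (2*k+1) - real (2*k'+1))"
    by (rule pow_diff_le) (use Suc in auto)
  also have "real (2*k+1) - real (2*k'+1) = 2" using Suc by simp
  also have "real (Suc (d-1)) = real d" using d1 by simp
  finally show ?thesis unfolding d_def by (simp add: mult_ac)
qed




lemma psi_cases: "psi l i = -1 \<or> psi l i = 1" unfolding psi_def by auto

lemma interaction_bound:
  fixes J :: "('n::finite\<Rightarrow>int) \<Rightarrow> ('n\<Rightarrow>int) \<Rightarrow> real"
  assumes nn: "\<forall>i j. J i j \<ge> 0" and sym: "\<forall>i j. J i j = J j i"
  shows "(\<Sum>\<^sub>\<infinity>(i,j)\<in>UNIV - ((- cube l) \<times> (- cube l)). J i j * (1 - psi l i * psi l j))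
     \<le> 4 * (\<Sum>i\<in>cube l. \<Sum>\<^sub>\<infinity>j\<in>- cube l. J i j)"
proof -
  define Q :: "('n\<Rightarrow>int) set" where "Q = cube l"
  define g where "g = (\<lambda>(i::'n\<Rightarrow>int,j::'n\<Rightarrow>int). J i j * (1 - psi l i * psi l j))"
  have gnn: "g x \<ge> 0" for x
  proof -
    obtain i j where x: "x = (i,j)" by fastforce
    have "psi l i * psi l j \<le> 1" using psi_cases[of l i] psi_cases[of l j] by auto
    then show ?thesis unfolding x g_def using nn by simp
  qed
  have gsym: "g (j,i) = g (i,j)" for i j unfolding g_def using sym by (simp add: mult.commute)
  have rhs_nn: "0 \<le> 4 * (\<Sum>i\<in>Q. \<Sum>\<^sub>\<infinity>j\<in>- Q. J i j)"
    using nn by (auto intro!: sum_nonneg infsum_nonneg)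
  define S where "S = UNIV - ((- Q) \<times> (- Q))"
  have "infsum g S \<le> 4 * (\<Sum>i\<in>Q. \<Sum>\<^sub>\<infinity>j\<in>- Q. J i j)"
  proof (cases "g summable_on S")
    case False
    then show ?thesis using rhs_nn by (simp add: infsum_not_exists)
  next
    case True
    define A where "A = Q \<times> (UNIV :: ('n\<Rightarrow>int) set)"
    define B where "B = (- Q) \<times> Q"
    define D where "D = Q \<times> (- Q)"
    have SAB: "S = A \<union> B" unfolding S_def A_def B_def by auto
    have sA: "g summable_on A" using True by (rule summable_on_subset_banach) (auto simp: SAB)
    have sB: "g summable_on B" using True by (rule summable_on_subset_banach) (auto simp: SAB)
    have sD: "g summable_on D" using sA by (rule summable_on_subset_banach) (auto simp: A_def D_def)
    have "infsum g S = infsum g A + infsum g B"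
      unfolding SAB by (rule infsum_Un_disjoint[OF sA sB]) (auto simp: A_def B_def)
    moreover have "infsum g A = infsum g D"
      by (rule infsum_cong_neutral) (auto simp: A_def D_def g_def psi_def Q_def)
    moreover have "infsum g B = infsum g D"
    proof -
      have "B = prod.swap ` D" unfolding B_def D_def by auto
      then have "infsum g B = infsum (g \<circ> prod.swap) D" by (simp add: infsum_reindex)
      also have "\<dots> = infsum g D" by (rule infsum_cong) (auto simp: gsym)
      finally show ?thesis .
    qed
    moreover have "infsum g D = (\<Sum>i\<in>Q. \<Sum>\<^sub>\<infinity>j\<in>- Q. 2 * J i j)"
    proof -
      have "infsum g D = infsum (\<lambda>i. infsum (\<lambda>j. g (i,j)) (- Q)) Q"
        unfolding D_def using infsum_Sigma_banach[of g Q "\<lambda>_. - Q"] sD by (simp add: D_def)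
      also have "\<dots> = (\<Sum>i\<in>Q. infsum (\<lambda>j. g (i,j)) (- Q))"
        by (simp add: Q_def finite_cube)
      also have "\<dots> = (\<Sum>i\<in>Q. \<Sum>\<^sub>\<infinity>j\<in>- Q. 2 * J i j)"
        by (intro sum.cong infsum_cong refl) (auto simp: g_def psi_def Q_def)
      finally show ?thesis .
    qed
    moreover have "(\<Sum>\<^sub>\<infinity>j\<in>- Q. 2 * J i j) = 2 * (\<Sum>\<^sub>\<infinity>j\<in>- Q. J i j)" for i
      by (rule infsum_cmult_right')
    ultimately show ?thesis by (simp add: sum_distrib_left)
  qed
  then show ?thesis unfolding S_def g_def Q_def .
qed




context
  fixes J :: "('n::finite\<Rightarrow>int) \<Rightarrow> ('n\<Rightarrow>int) \<Rightarrow> real" and Lam :: real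
  assumes nn: "\<forall>i j. J i j \<ge> 0"
    and summ: "\<forall>i. J i summable_on UNIV \<and> (\<Sum>\<^sub>\<infinity>j. J i j) \<le> Lam"
begin

lemma row_le_Lam: "infsum (J i) X \<le> Lam"
proof -
  have "infsum (J i) X \<le> infsum (J i) UNIV"
    by (rule infsum_mono_neutral) (use summ nn summable_on_subset_banach[of "J i" UNIV X] in auto)
  also have "\<dots> \<le> Lam" using summ by simp
  finally show ?thesis .
qed

lemma sigma_bdd: "bdd_above (range (\<lambda>i. \<Sum>\<^sub>\<infinity>j\<in>{j. supnorm (j - i) \<ge> int R}. J i j))"
  by (rule bdd_aboveI2[where M=Lam]) (rule row_le_Lam)

lemma le_sigma: "(\<Sum>\<^sub>\<infinity>j\<in>{j. supnorm (j - i) \<ge> int R}. J i j) \<le> sigma_tail J R"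
  unfolding sigma_tail_def by (rule cSUP_upper[OF _ sigma_bdd]) simp

lemma sigma_nonneg: "sigma_tail J R \<ge> 0"
  using le_sigma[of undefined R] infsum_nonneg[of "{j. supnorm (j - undefined) \<ge> int R}" "J undefined"] nn
  by force

lemma row_le_sigma:
  assumes "(i::'n\<Rightarrow>int) \<in> cube l"
  shows "(\<Sum>\<^sub>\<infinity>j\<in>- cube l. J i j) \<le> sigma_tail J (l + 1 - nat (supnorm i))"
proof -
  have si: "0 \<le> supnorm i" "supnorm i \<le> int l" using assms supnorm_nonneg unfolding cube_def by auto
  define R where "R = l + 1 - nat (supnorm i)"
  have R: "int R = int l + 1 - supnorm i" unfolding R_def using si by linarith
  have sub: "- cube l \<subseteq> {j. supnorm (j - i) \<ge> int R}"
  proof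
    fix j :: "'n\<Rightarrow>int" assume "j \<in> - cube l"
    then have "supnorm j > int l" unfolding cube_def by auto
    then show "j \<in> {j. supnorm (j - i) \<ge> int R}" using supnorm_triangle[of j i] R by auto
  qed
  have "(\<Sum>\<^sub>\<infinity>j\<in>- cube l. J i j) \<le> (\<Sum>\<^sub>\<infinity>j\<in>{j. supnorm (j - i) \<ge> int R}. J i j)"
    by (rule infsum_mono_neutral) (use summ nn sub summable_on_subset_banach[of "J i" UNIV "- cube l"]
       summable_on_subset_banach[of "J i" UNIV "{j. supnorm (j - i) \<ge> int R}"] in auto)
  also have "\<dots> \<le> sigma_tail J R" by (rule le_sigma)
  finally show ?thesis unfolding R_def .
qed

lemma sum_sigma_bound:
  assumes d: "CARD('n) \<ge> 1"
  shows "(\<Sum>i\<in>cube l. sigma_tail J (l + 1 - nat (supnorm (i::'n\<Rightarrow>int))))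
     \<le> 2 * CARD('n) * (2*l+1)^(CARD('n)-1) * (\<Sum>m=1..l+1. sigma_tail J m)"
proof -
  define g where "g = (\<lambda>i::'n\<Rightarrow>int. l + 1 - nat (supnorm i))"
  define K :: real where "K = 2 * CARD('n) * (2*l+1)^(CARD('n)-1)"
  have gT: "g ` cube l \<subseteq> {1..l+1}" unfolding g_def cube_def by auto
  have "(\<Sum>i\<in>cube l. sigma_tail J (g i)) = (\<Sum>m\<in>{1..l+1}. \<Sum>i\<in>{i\<in>cube l. g i = m}. sigma_tail J (g i))"
    by (rule sum.group[symmetric]) (use finite_cube gT in auto)
  also have "\<dots> = (\<Sum>m\<in>{1..l+1}. real (card {i\<in>cube l. g i = m}) * sigma_tail J m)"
    by (rule sum.cong) auto
  also have "\<dots> \<le> (\<Sum>m\<in>{1..l+1}. K * sigma_tail J m)"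
  proof (rule sum_mono)
    fix m assume m: "m \<in> {1..l+1}"
    have "{i\<in>cube l. g i = m} \<subseteq> {i::'n\<Rightarrow>int. supnorm i = int (l + 1 - m)}"
      unfolding g_def cube_def using supnorm_nonneg by force
    moreover have "finite {i::'n\<Rightarrow>int. supnorm i = int (l + 1 - m)}"
      by (rule finite_subset[OF _ finite_cube[of "l+1-m"]]) (auto simp: cube_def)
    ultimately have "card {i\<in>cube l. g i = m} \<le> card {i::'n\<Rightarrow>int. supnorm i = int (l + 1 - m)}"
      by (rule card_mono[rotated])
    then have "real (card {i\<in>cube l. g i = m}) \<le> 2 * CARD('n) * (2*(l+1-m)+1)^(CARD('n)-1)"
      using shell_card[OF d, of "l+1-m"] by linarith
    also have "\<dots> \<le> K" unfolding K_def of_nat_le_iff using m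
      by (intro mult_left_mono power_mono) auto
    finally show "real (card {i\<in>cube l. g i = m}) * sigma_tail J m \<le> K * sigma_tail J m"
      by (rule mult_right_mono) (rule sigma_nonneg)
  qed
  also have "\<dots> = K * (\<Sum>m=1..l+1. sigma_tail J m)" by (rule sum_distrib_left[symmetric])
  finally show ?thesis unfolding g_def K_def .
qed

end



definition rep :: "nat \<Rightarrow> ('n::finite\<Rightarrow>int) \<Rightarrow> ('n\<Rightarrow>int)" where
  "rep \<tau> x = (\<lambda>k. x k mod int \<tau>)"

definition F0 :: "nat \<Rightarrow> ('n::finite\<Rightarrow>int) set" where
  "F0 \<tau> = {x. \<forall>k. 0 \<le> x k \<and> x k < int \<tau>}"

lemma cong_iff_rep: "(\<forall>k. int \<tau> dvd (y k - g k)) \<longleftrightarrow> rep \<tau> y = rep \<tau> (g::'n::finite\<Rightarrow>int)"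
  unfolding rep_def fun_eq_iff by (simp add: mod_eq_dvd_iff)

lemma rep_F0: "g \<in> F0 \<tau> \<Longrightarrow> rep \<tau> g = g"
  unfolding rep_def F0_def fun_eq_iff by auto

lemma rep_in_F0: "\<tau> \<ge> 1 \<Longrightarrow> rep \<tau> y \<in> F0 \<tau>"
  unfolding rep_def F0_def by auto

lemma F0_eq: "F0 \<tau> = (PiE UNIV (\<lambda>_. {0..<int \<tau>}) :: ('n::finite\<Rightarrow>int) set)"
proof (rule set_eqI)
  fix x :: "'n\<Rightarrow>int"
  have "(\<forall>k. 0 \<le> x k \<and> x k < int \<tau>) \<longleftrightarrow> (\<forall>k. x k \<in> {0..<int \<tau>})" by simp
  then show "x \<in> F0 \<tau> \<longleftrightarrow> x \<in> PiE UNIV (\<lambda>_. {0..<int \<tau>})"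
    unfolding F0_def by (simp add: PiE_iff)
qed

lemma finite_F0: "finite (F0 \<tau> :: ('n::finite\<Rightarrow>int) set)"
  unfolding F0_eq by (rule finite_PiE) auto

lemma card_F0: "card (F0 \<tau> :: ('n::finite\<Rightarrow>int) set) = \<tau>^CARD('n)"
  unfolding F0_eq by (simp add: card_PiE)

lemma fund_F0: "\<tau> \<ge> 1 \<Longrightarrow> fundamental_domain \<tau> (F0 \<tau> :: ('n::finite\<Rightarrow>int) set)"
  unfolding fundamental_domain_def cong_iff_rep
proof
  fix x :: "'n\<Rightarrow>int" assume t: "\<tau> \<ge> 1"
  show "\<exists>!f. f \<in> F0 \<tau> \<and> rep \<tau> x = rep \<tau> f"
    by (rule ex1I[of _ "rep \<tau> x"]) (use t in \<open>auto simp: rep_F0 rep_in_F0\<close>)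
qed

lemma periodic:
  fixes h :: "('n::finite\<Rightarrow>int) \<Rightarrow> real"
  assumes t: "\<tau> \<ge> 1" and h2: "\<forall>F. finite F \<longrightarrow> fundamental_domain \<tau> F \<longrightarrow> (\<Sum>i\<in>F. h i) = 0"
  shows "h x = h (rep \<tau> x)"
proof (cases "x = rep \<tau> x")
  case True then show ?thesis by (rule arg_cong)
next
  case False
  define f where "f = rep \<tau> x"
  have fF: "f \<in> F0 \<tau>" unfolding f_def by (rule rep_in_F0[OF t])
  have xF: "x \<notin> F0 \<tau>"
  proof
    assume "x \<in> F0 \<tau>"
    then have "rep \<tau> x = x" by (rule rep_F0)
    then show False using False by (metis)
  qed
  define F' where "F' = insert x (F0 \<tau> - {f})"
  have fin: "finite F'" unfolding F'_def by (intro finite.insertI finite_Diff finite_F0)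
  have "fundamental_domain \<tau> F'"
    unfolding fundamental_domain_def cong_iff_rep
  proof
    fix y :: "'n\<Rightarrow>int"
    show "\<exists>!g. g \<in> F' \<and> rep \<tau> y = rep \<tau> g"
    proof (cases "rep \<tau> y = f")
      case True
      show ?thesis
      proof (rule ex1I[of _ x])
        have "x \<in> F'" unfolding F'_def by (rule insertI1)
        moreover have "rep \<tau> y = rep \<tau> x" using True unfolding f_def .
        ultimately show "x \<in> F' \<and> rep \<tau> y = rep \<tau> x" by (rule conjI)
      next
        fix g assume g: "g \<in> F' \<and> rep \<tau> y = rep \<tau> g"
        show "g = x"
        proof (rule ccontr)
          assume "g \<noteq> x"
          then have gF: "g \<in> F0 \<tau>" and gf: "g \<noteq> f" using g unfolding F'_def by blast+
          have "rep \<tau> g = g" using gF by (rule rep_F0)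
          then have "g = f" using g True by metis
          then show False using gf by blast
        qed
      qed
    next
      case False
      have ry: "rep \<tau> y \<in> F0 \<tau>" by (rule rep_in_F0[OF t])
      have rry: "rep \<tau> (rep \<tau> y) = rep \<tau> y" using ry by (rule rep_F0)
      show ?thesis
      proof (rule ex1I[of _ "rep \<tau> y"])
        have "rep \<tau> y \<in> F'" unfolding F'_def using ry False by blast
        then show "rep \<tau> y \<in> F' \<and> rep \<tau> y = rep \<tau> (rep \<tau> y)" using rry by metis
      next
        fix g assume g: "g \<in> F' \<and> rep \<tau> y = rep \<tau> g"
        show "g = rep \<tau> y"
        proof (cases "g = x")
          case True
          then have "rep \<tau> y = f" using g unfolding f_def by metis
          then show ?thesis using False by blast
        next
          case False
          then have "g \<in> F0 \<tau>" using g unfolding F'_def by blast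
          then have "rep \<tau> g = g" by (rule rep_F0)
          then show ?thesis using g by metis
        qed
      qed
    qed
  qed
  then have "sum h F' = 0" by (rule h2[rule_format, OF fin])
  moreover have "sum h F' = h x + sum h (F0 \<tau> - {f})"
    unfolding F'_def by (rule sum.insert[OF finite_Diff[OF finite_F0]]) (use xF in blast)
  moreover have "sum h (F0 \<tau>) = h f + sum h (F0 \<tau> - {f})"
    by (rule sum.remove[OF finite_F0 fF])
  moreover have "sum h (F0 \<tau>) = 0" by (rule h2[rule_format, OF finite_F0 fund_F0[OF t]])
  ultimately have "h x = h f" by linarith
  then show ?thesis unfolding f_def .
qed




lemma cnt_bounds:
  fixes l \<tau> :: nat and a :: int
  assumes t: "\<tau> \<ge> 1" and a: "0 \<le> a" "a < int \<tau>"
  defines "x \<equiv> real (2*l) / real \<tau>"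
  shows "x - 1 \<le> real (card {b\<in>{-int l..int l}. b mod int \<tau> = a})"
    and "real (card {b\<in>{-int l..int l}. b mod int \<tau> = a}) \<le> x + 1"
proof -
  define K where "K = {k::int. -int l \<le> int \<tau> * k + a \<and> int \<tau> * k + a \<le> int l}"
  have tp: "int \<tau> > 0" "real \<tau> > 0" using t by auto
  have img: "{b\<in>{-int l..int l}. b mod int \<tau> = a} = (\<lambda>k. int \<tau> * k + a) ` K"
  proof (rule set_eqI, rule iffI)
    fix b assume b: "b \<in> {b\<in>{-int l..int l}. b mod int \<tau> = a}"
    have bm: "b mod int \<tau> = a" using b by simp
    have "b = int \<tau> * (b div int \<tau>) + a" using mult_div_mod_eq[of "int \<tau>" b] bm by linarith
    then show "b \<in> (\<lambda>k. int \<tau> * k + a) ` K" unfolding K_def using b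
      by (intro image_eqI[of _ _ "b div int \<tau>"]) simp_all
  next
    fix b assume "b \<in> (\<lambda>k. int \<tau> * k + a) ` K"
    then obtain k where k: "k \<in> K" "b = int \<tau> * k + a" by blast
    have "b mod int \<tau> = a mod int \<tau>" unfolding k(2) by simp
    also have "\<dots> = a" using a by simp
    finally show "b \<in> {b\<in>{-int l..int l}. b mod int \<tau> = a}" using k unfolding K_def by auto
  qed
  have inj: "inj_on (\<lambda>k. int \<tau> * k + a) K" unfolding inj_on_def using tp by auto
  define lo where "lo = \<lceil>real_of_int (- int l - a) / real \<tau>\<rceil>"
  define hi where "hi = \<lfloor>real_of_int (int l - a) / real \<tau>\<rfloor>"
  have K: "K = {lo..hi}"
  proof (rule set_eqI)
    fix k :: int
    have "k \<in> K \<longleftrightarrow> (- int l - a \<le> int \<tau> * k \<and> int \<tau> * k \<le> int l - a)"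
      unfolding K_def by simp arith
    also have "\<dots> \<longleftrightarrow> real_of_int (- int l - a) \<le> real_of_int (int \<tau> * k) \<and> real_of_int (int \<tau> * k) \<le> real_of_int (int l - a)"
      by (simp only: of_int_le_iff)
    also have "\<dots> \<longleftrightarrow> real_of_int (- int l - a) \<le> real \<tau> * real_of_int k \<and> real \<tau> * real_of_int k \<le> real_of_int (int l - a)"
      by simp
    also have "\<dots> \<longleftrightarrow> real_of_int (- int l - a) / real \<tau> \<le> real_of_int k \<and> real_of_int k \<le> real_of_int (int l - a) / real \<tau>"
      using tp by (simp add: pos_divide_le_eq pos_le_divide_eq mult.commute)
    also have "\<dots> \<longleftrightarrow> k \<in> {lo..hi}" unfolding lo_def hi_def
      by (simp add: ceiling_le_iff le_floor_iff)
    finally show "k \<in> K \<longleftrightarrow> k \<in> {lo..hi}" .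
  qed
  have cardK: "card {b\<in>{-int l..int l}. b mod int \<tau> = a} = nat (hi - lo + 1)"
    unfolding img card_image[OF inj] unfolding K by simp
  have diff: "real_of_int (int l - a) / real \<tau> - real_of_int (- int l - a) / real \<tau> = x"
    unfolding x_def using tp by (simp add: field_simps)
  have h1: "real_of_int hi \<le> real_of_int (int l - a) / real \<tau>" unfolding hi_def by simp
  have h2: "real_of_int hi > real_of_int (int l - a) / real \<tau> - 1" unfolding hi_def by linarith
  have l1: "real_of_int lo \<ge> real_of_int (- int l - a) / real \<tau>" unfolding lo_def by simp
  have l2: "real_of_int lo < real_of_int (- int l - a) / real \<tau> + 1" unfolding lo_def by linarith
  have x0: "x \<ge> 0" unfolding x_def by simp
  have "real_of_int (hi - lo + 1) > -1" using h2 l2 diff x0 by simp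
  then have nn: "hi - lo + 1 \<ge> 0" by linarith
  have eqr: "real (card {b\<in>{-int l..int l}. b mod int \<tau> = a}) = real_of_int (hi - lo + 1)"
    unfolding cardK using nn by simp
  show "x - 1 \<le> real (card {b\<in>{-int l..int l}. b mod int \<tau> = a})"
    unfolding eqr using h2 l2 diff by simp
  show "real (card {b\<in>{-int l..int l}. b mod int \<tau> = a}) \<le> x + 1"
    unfolding eqr using h1 l1 diff by simp
qed


lemma fiber_eq:
  "{x\<in>cube l. rep \<tau> x = f} = (PiE UNIV (\<lambda>k. {b\<in>{-int l..int l}. b mod int \<tau> = f k}) :: ('n::finite\<Rightarrow>int) set)"
proof (rule set_eqI)
  fix x :: "'n\<Rightarrow>int"
  have "x \<in> {x\<in>cube l. rep \<tau> x = f} \<longleftrightarrow> (\<forall>k. x k \<in> {-int l..int l}) \<and> (\<forall>k. x k mod int \<tau> = f k)"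
    unfolding cube_eq rep_def fun_eq_iff by (simp add: PiE_iff)
  also have "\<dots> \<longleftrightarrow> (\<forall>k. x k \<in> {b\<in>{-int l..int l}. b mod int \<tau> = f k})" by blast
  also have "\<dots> \<longleftrightarrow> x \<in> PiE UNIV (\<lambda>k. {b\<in>{-int l..int l}. b mod int \<tau> = f k})"
    by (simp add: PiE_iff)
  finally show "x \<in> {x\<in>cube l. rep \<tau> x = f} \<longleftrightarrow> x \<in> PiE UNIV (\<lambda>k. {b\<in>{-int l..int l}. b mod int \<tau> = f k})" .
qed

lemma field_sum_bound:
  fixes h :: "('n::finite\<Rightarrow>int) \<Rightarrow> real" and \<mu> :: real
  assumes t: "\<tau> \<ge> 1" and d: "CARD('n) \<ge> 1"
    and hb: "\<forall>i. \<bar>h i\<bar> \<le> \<mu>"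
    and h2: "\<forall>F. finite F \<longrightarrow> fundamental_domain \<tau> F \<longrightarrow> (\<Sum>i\<in>F. h i) = 0"
  shows "\<bar>\<Sum>i\<in>cube l. h i\<bar> \<le> \<mu> * real \<tau> ^ CARD('n) * (2 * real CARD('n) * (2 * real l + 1)^(CARD('n)-1))"
proof -
  define d where "d = CARD('n)"
  have d1: "d = Suc (d-1)" using d unfolding d_def by simp
  define x where "x = real (2*l) / real \<tau>"
  define L where "L = (max 0 (x - 1)) ^ d"
  define U where "U = (x + 1) ^ d"
  define n where "n = (\<lambda>f::'n\<Rightarrow>int. real (card {i\<in>cube l. rep \<tau> i = f}))"
  have x0: "0 \<le> x" unfolding x_def by simp
  have xl: "x \<le> real (2*l)"
  proof -
    have "real (2*l) / real \<tau> \<le> real (2*l) / 1" by (rule divide_left_mono) (use t in auto)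
    then show ?thesis unfolding x_def by simp
  qed
  have nLU: "L \<le> n f \<and> n f \<le> U" if f: "f \<in> F0 \<tau>" for f
  proof -
    have fk: "0 \<le> f k \<and> f k < int \<tau>" for k using f unfolding F0_def by auto
    define c where "c = (\<lambda>k. real (card {b\<in>{-int l..int l}. b mod int \<tau> = f k}))"
    have nf: "n f = (\<Prod>k\<in>UNIV. c k)"
      unfolding n_def fiber_eq c_def by (simp add: card_PiE)
    have cb: "max 0 (x - 1) \<le> c k \<and> c k \<le> x + 1" for k
      using cnt_bounds[OF t, of "f k" l] fk[of k] unfolding c_def x_def by auto
    have "L = (\<Prod>k\<in>(UNIV::'n set). max 0 (x - 1))" unfolding L_def d_def by simp
    also have "\<dots> \<le> n f" unfolding nf by (rule Groups_Big.prod_mono[where A=UNIV and f="\<lambda>_. max 0 (x - 1)" and g=c]) (use cb in auto)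
    finally have 1: "L \<le> n f" .
    have "n f \<le> (\<Prod>k\<in>(UNIV::'n set). x + 1)" unfolding nf
      by (rule Groups_Big.prod_mono) (use cb in \<open>auto simp: c_def\<close>)
    also have "\<dots> = U" unfolding U_def d_def by simp
    finally show ?thesis using 1 by simp
  qed
  have "(\<Sum>i\<in>cube l. h i) = (\<Sum>i\<in>cube l. h (rep \<tau> i))"
    by (rule sum.cong[OF refl]) (rule periodic[OF t h2])
  also have "\<dots> = (\<Sum>f\<in>F0 \<tau>. \<Sum>i\<in>{i\<in>cube l. rep \<tau> i = f}. h (rep \<tau> i))"
    by (rule sum.group[symmetric]) (use finite_cube finite_F0 rep_in_F0[OF t] in auto)
  also have "\<dots> = (\<Sum>f\<in>F0 \<tau>. n f * h f)"
    unfolding n_def by (rule sum.cong) auto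
  also have "\<dots> = (\<Sum>f\<in>F0 \<tau>. (n f - L) * h f) + L * (\<Sum>f\<in>F0 \<tau>. h f)"
  proof -
    have "(\<Sum>f\<in>F0 \<tau>. (n f - L) * h f) = (\<Sum>f\<in>F0 \<tau>. n f * h f) - L * (\<Sum>f\<in>F0 \<tau>. h f)"
      by (simp add: left_diff_distrib sum_subtractf sum_distrib_left)
    then show ?thesis by linarith
  qed
  also have "(\<Sum>f\<in>F0 \<tau>. h f) = 0" by (rule h2[rule_format, OF finite_F0 fund_F0[OF t]])
  finally have eq: "(\<Sum>i\<in>cube l. h i) = (\<Sum>f\<in>F0 \<tau>. (n f - L) * h f)" by simp
  have "\<bar>\<Sum>f\<in>F0 \<tau>. (n f - L) * h f\<bar> \<le> (\<Sum>f\<in>F0 \<tau>. \<bar>(n f - L) * h f\<bar>)"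
    by (rule sum_abs)
  also have "\<dots> \<le> (\<Sum>f\<in>(F0 \<tau>::('n\<Rightarrow>int) set). (U - L) * \<mu>)"
  proof (rule sum_mono)
    fix f :: "'n\<Rightarrow>int" assume f: "f \<in> F0 \<tau>"
    have "\<bar>(n f - L) * h f\<bar> = \<bar>n f - L\<bar> * \<bar>h f\<bar>" by (rule abs_mult)
    also have "\<dots> \<le> (U - L) * \<mu>"
      by (rule mult_mono) (use nLU[OF f] hb in auto)
    finally show "\<bar>(n f - L) * h f\<bar> \<le> (U - L) * \<mu>" .
  qed
  also have "\<dots> = real \<tau> ^ d * (U - L) * \<mu>" using card_F0[of \<tau>, where 'n='n] unfolding d_def by simp
  also have "U - L \<le> 2 * real d * (2 * real l + 1)^(d-1)"
  proof -
    have "U - L = (x+1)^Suc (d-1) - (max 0 (x - 1))^Suc (d-1)"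
      unfolding U_def L_def by (simp only: d1[symmetric])
    also have "\<dots> \<le> real (Suc (d-1)) * (x+1)^(d-1) * ((x+1) - max 0 (x - 1))"
      by (rule pow_diff_le) (use x0 in auto)
    also have "\<dots> \<le> real d * (2 * real l + 1)^(d-1) * 2"
    proof (intro mult_mono)
      show "real (Suc (d-1)) \<le> real d" using d1 by simp
      show "(x+1)^(d-1) \<le> (2 * real l + 1)^(d-1)" by (rule power_mono) (use xl x0 in auto)
      show "(x+1) - max 0 (x - 1) \<le> 2" using x0 by auto
    qed (use x0 in auto)
    finally show ?thesis by simp
  qed
  then have "real \<tau> ^ d * (U - L) * \<mu> \<le> real \<tau> ^ d * (2 * real d * (2 * real l + 1)^(d-1)) * \<mu>"
    using hb by (intro mult_right_mono mult_left_mono) (auto intro: order_trans[OF abs_ge_zero])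
  finally show ?thesis unfolding eq d_def by (simp add: mult_ac)
qed




theorem mainTheorem7:
  fixes \<mu> :: real and \<tau> :: nat
  assumes "CARD('n::finite) \<ge> 2" and "\<mu> > 0" and "\<tau> \<ge> 1"
  shows "\<exists>C\<ge>1. \<forall>(J :: ('n \<Rightarrow> int) \<Rightarrow> ('n \<Rightarrow> int) \<Rightarrow> real) (h :: ('n \<Rightarrow> int) \<Rightarrow> real)
            (lam::real) (Lam::real) (l::nat).
     (\<forall>i j. J i j \<ge> 0) \<longrightarrow>
     0 < lam \<longrightarrow> lam \<le> Lam \<longrightarrow>
     (\<forall>i j. J i j = J j i) \<longrightarrow>
     (\<forall>i. J i i = 0) \<longrightarrow>
     (\<forall>i j. l1norm (i - j) = 1 \<longrightarrow> J i j \<ge> lam) \<longrightarrow>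
     (\<forall>i. J i summable_on UNIV \<and> (\<Sum>\<^sub>\<infinity>j. J i j) \<le> Lam) \<longrightarrow>
     (\<forall>i. \<bar>h i\<bar> \<le> \<mu>) \<longrightarrow>
     (\<forall>F. finite F \<longrightarrow> fundamental_domain \<tau> F \<longrightarrow> (\<Sum>i\<in>F. h i) = 0) \<longrightarrow>
     l \<ge> 1 \<longrightarrow>
     hamiltonian J h (cube l) (psi l)
       \<le> C * real l ^ (CARD('n) - 1) * (1 + (\<Sum>m=1..l+1. sigma_tail J m))"
proof -
  define d where "d = CARD('n)"
  have d1: "CARD('n) \<ge> 1" using assms(1) by simp
  define K :: real where "K = 8 * real d * 3^(d-1)"
  have K1: "K \<ge> 1"
  proof -
    have a: "1 \<le> real d" using d1 unfolding d_def by (metis of_nat_1 of_nat_le_iff)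
    have b: "(1::real) \<le> 3^(d-1)" by (rule one_le_power) simp
    have "1 * 1 \<le> real d * 3^(d-1)" by (rule mult_mono) (use a b in auto)
    then show ?thesis unfolding K_def by linarith
  qed
  define C where "C = K * (1 + \<mu> * real \<tau> ^ d)"
  have mt: "0 \<le> \<mu> * real \<tau> ^ d" using assms(2) by simp
  have C1: "C \<ge> 1"
  proof -
    have "1 * 1 \<le> K * (1 + \<mu> * real \<tau> ^ d)" by (rule mult_mono) (use K1 mt in auto)
    then show ?thesis unfolding C_def by simp
  qed
  show ?thesis
  proof (intro exI[of _ C] conjI C1 allI impI)
    fix J :: "('n \<Rightarrow> int) \<Rightarrow> ('n \<Rightarrow> int) \<Rightarrow> real" and h :: "('n \<Rightarrow> int) \<Rightarrow> real"
      and lam Lam :: real and l :: nat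
    assume nn: "\<forall>i j. J i j \<ge> 0" and sym: "\<forall>i j. J i j = J j i"
      and summ: "\<forall>i. J i summable_on UNIV \<and> (\<Sum>\<^sub>\<infinity>j. J i j) \<le> Lam"
      and hb: "\<forall>i. \<bar>h i\<bar> \<le> \<mu>"
      and h2: "\<forall>F. finite F \<longrightarrow> fundamental_domain \<tau> F \<longrightarrow> (\<Sum>i\<in>F. h i) = 0"
      and l1: "l \<ge> 1"
    define S where "S = (\<Sum>m=1..l+1. sigma_tail J m)"
    define P :: real where "P = (2 * real l + 1)^(d-1)"
    have S0: "S \<ge> 0" unfolding S_def by (rule sum_nonneg) (rule sigma_nonneg[OF nn summ])
    have P3: "P \<le> 3^(d-1) * real l ^ (d-1)"
    proof -
      have "P \<le> (3 * real l)^(d-1)" unfolding P_def by (rule power_mono) (use l1 in auto)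
      then show ?thesis by (simp add: power_mult_distrib)
    qed
    have P0: "P \<ge> 0" unfolding P_def by simp
    have I: "(\<Sum>\<^sub>\<infinity>(i,j)\<in>UNIV - ((- cube l) \<times> (- cube l)). J i j * (1 - psi l i * psi l j))
       \<le> 8 * real d * P * S"
    proof -
      have "(\<Sum>\<^sub>\<infinity>(i,j)\<in>UNIV - ((- cube l) \<times> (- cube l)). J i j * (1 - psi l i * psi l j))
          \<le> 4 * (\<Sum>i\<in>cube l. \<Sum>\<^sub>\<infinity>j\<in>- cube l. J i j)"
        by (rule interaction_bound[OF nn sym])
      also have "(\<Sum>i\<in>cube l. \<Sum>\<^sub>\<infinity>j\<in>- cube l. J i j)
          \<le> (\<Sum>i\<in>cube l. sigma_tail J (l + 1 - nat (supnorm (i::'n\<Rightarrow>int))))"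
        by (rule sum_mono) (rule row_le_sigma[OF nn summ])
      also have "\<dots> \<le> 2 * CARD('n) * (2*l+1)^(CARD('n)-1) * S"
        unfolding S_def by (rule sum_sigma_bound[OF nn summ d1])
      also have "(2 * CARD('n) * (2*l+1)^(CARD('n)-1) :: real) = 2 * real d * P"
        unfolding P_def d_def by (simp add: add.commute)
      finally show ?thesis by simp
    qed
    have Fb: "(\<Sum>i\<in>cube l. h i * psi l i) \<le> 2 * real d * P * (\<mu> * real \<tau> ^ d)"
    proof -
      have "(\<Sum>i\<in>cube l. h i * psi l i) = - (\<Sum>i\<in>cube l. h i)"
        by (simp add: psi_def sum_negf)
      also have "\<dots> \<le> \<bar>\<Sum>i\<in>cube l. h i\<bar>" by simp
      also have "\<dots> \<le> \<mu> * real \<tau> ^ CARD('n) * (2 * real CARD('n) * (2 * real l + 1)^(CARD('n)-1))"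
        by (rule field_sum_bound[OF assms(3) d1 hb h2])
      also have "\<dots> = 2 * real d * P * (\<mu> * real \<tau> ^ d)" unfolding P_def d_def by simp
      finally show ?thesis .
    qed
    have "hamiltonian J h (cube l) (psi l) \<le> 8 * real d * P * S + 2 * real d * P * (\<mu> * real \<tau> ^ d)"
      unfolding hamiltonian_def using I Fb by linarith
    also have "\<dots> \<le> 8 * real d * P * (S + \<mu> * real \<tau> ^ d)"
    proof -
      have z: "0 \<le> real d * P * (\<mu> * real \<tau> ^ d)" using P0 mt by simp
      have e1: "8 * real d * P * (S + \<mu> * real \<tau> ^ d) = 8 * real d * P * S + 8 * (real d * P * (\<mu> * real \<tau> ^ d))"
        by (simp add: algebra_simps)
      have e2: "2 * real d * P * (\<mu> * real \<tau> ^ d) = 2 * (real d * P * (\<mu> * real \<tau> ^ d))" by simp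
      show ?thesis unfolding e1 e2 using z by linarith
    qed
    also have "\<dots> \<le> 8 * real d * (3^(d-1) * real l ^ (d-1)) * (S + \<mu> * real \<tau> ^ d)"
      using P3 S0 mt by (intro mult_right_mono mult_left_mono) auto
    also have "\<dots> \<le> K * real l ^ (d-1) * ((1 + \<mu> * real \<tau> ^ d) * (1 + S))"
    proof -
      have "S + \<mu> * real \<tau> ^ d \<le> (1 + \<mu> * real \<tau> ^ d) * (1 + S)"
        using S0 mt by (simp add: algebra_simps)
      moreover have "0 \<le> K * real l ^ (d-1)" using K1 by simp
      ultimately have "K * real l ^ (d-1) * (S + \<mu> * real \<tau> ^ d) \<le> K * real l ^ (d-1) * ((1 + \<mu> * real \<tau> ^ d) * (1 + S))"
        by (rule mult_left_mono)
      then show ?thesis unfolding K_def by (simp add: mult_ac)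
    qed
    also have "\<dots> = C * real l ^ (CARD('n) - 1) * (1 + (\<Sum>m=1..l+1. sigma_tail J m))"
      unfolding C_def S_def d_def by (simp add: mult_ac)
    finally show "hamiltonian J h (cube l) (psi l) \<le> C * real l ^ (CARD('n) - 1) * (1 + (\<Sum>m=1..l+1. sigma_tail J m))" .
  qed
qed



end
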